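(* Let $X$ be a Banach space and $\kappa$ an infinite cardinal. If $X$ is $\mathrm{ASQ}_{<\kappa}$, then $X$ has the $\mathrm{SD2P}_{<\kappa}$. Moreover, if $\kappa$ is uncountable and $X$ is $\mathrm{SQ}_{<\kappa}$, then $X$ has the $1$-$\mathrm{ASD2P}_{<\kappa}$.
   Context: A Banach space $X$ is $\mathrm{ASQ}_{<\kappa}$ if for every set $A\subset S_X$ with $|A|<\kappa$ and every $\varepsilon>0$ there exists $y\in S_X$ with $\|x\pm y\|\le 1+\varepsilon$ for all $x\in A$; it is $\mathrm{SQ}_{<\kappa}$ if for every such $A$ there exists $y\in S_X$ with $\|x\pm y\|\le 1$ for all $x\in A$. For $\delta>0$, a set $B\subset S_X$ is said to $\delta$-norm a set $A\subset S_{X^*}$ if $\sup_{x\in B}y^*(x)\ge\delta$ for every $y^*\in A$. $X$ has the $\mathrm{SD2P}_{<\kappa}$ if for every $A\subset S_{X^*}$ with $|A|<\kappa$ and every $\varepsilon>0$ there exist $B\subset S_X$ and $x^*\in S_{X^*}$ such that $x^*(x)\ge 1-\varepsilon$ for all $x\in B$ and $B$ $(1-\varepsilon)$-norms $A$. $X$ has the $1$-$\mathrm{ASD2P}_{<\kappa}$ if for every $A\subset S_{X^*}$ with $|A|<\kappa$ there exist $B\subset S_X$ and $x^*\in S_{X^*}$ such that $x^*(x)=1$ for all $x\in B$ and $B$ $1$-norms $A$. *)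

theory Defs
  imports "HOL-Analysis.Analysis"
begin

text \<open>Real Banach spaces are types of class banach; the dual X* is the type
  of bounded linear functionals (bounded linear maps into real) with the operator norm.
  A cardinal kappa is represented by a cardinal order relation on some type.\<close>

definition unit_sphere :: "'a::real_normed_vector set" where
  "unit_sphere = {x. norm x = 1}"

definition ASQ_lt :: "'k rel \<Rightarrow> 'a::banach itself \<Rightarrow> bool" where
  "ASQ_lt \<kappa> _ \<longleftrightarrow>
     (\<forall>A::'a set. A \<subseteq> unit_sphere \<and> (card_of A, \<kappa>) \<in> ordLess \<longrightarrow>
        (\<forall>\<epsilon>>0. \<exists>y\<in>unit_sphere. \<forall>x\<in>A. norm (x + y) \<le> 1 + \<epsilon> \<and> norm (x - y) \<le> 1 + \<epsilon>))"

definition SQ_lt :: "'k rel \<Rightarrow> 'a::banach itself \<Rightarrow> bool" where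
  "SQ_lt \<kappa> _ \<longleftrightarrow>
     (\<forall>A::'a set. A \<subseteq> unit_sphere \<and> (card_of A, \<kappa>) \<in> ordLess \<longrightarrow>
        (\<exists>y\<in>unit_sphere. \<forall>x\<in>A. norm (x + y) \<le> 1 \<and> norm (x - y) \<le> 1))"

text \<open>B delta-norms A: sup over x in B of y*(x) is at least delta, for each y* in A
  (sup written out via approximation).\<close>
definition delta_norms :: "real \<Rightarrow> 'a::real_normed_vector set \<Rightarrow> ('a \<Rightarrow>\<^sub>L real) set \<Rightarrow> bool" where
  "delta_norms \<delta> B A \<longleftrightarrow>
     (\<forall>f\<in>A. \<forall>\<eta>>0. \<exists>x\<in>B. blinfun_apply f x > \<delta> - \<eta>)"

definition SD2P_lt :: "'k rel \<Rightarrow> 'a::banach itself \<Rightarrow> bool" where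
  "SD2P_lt \<kappa> _ \<longleftrightarrow>
     (\<forall>A::('a \<Rightarrow>\<^sub>L real) set. A \<subseteq> unit_sphere \<and> (card_of A, \<kappa>) \<in> ordLess \<longrightarrow>
        (\<forall>\<epsilon>>0. \<exists>B::'a set. \<exists>g::'a \<Rightarrow>\<^sub>L real. B \<subseteq> unit_sphere \<and> g \<in> unit_sphere \<and>
            (\<forall>x\<in>B. blinfun_apply g x \<ge> 1 - \<epsilon>) \<and> delta_norms (1 - \<epsilon>) B A))"

definition one_ASD2P_lt :: "'k rel \<Rightarrow> 'a::banach itself \<Rightarrow> bool" where
  "one_ASD2P_lt \<kappa> _ \<longleftrightarrow>
     (\<forall>A::('a \<Rightarrow>\<^sub>L real) set. A \<subseteq> unit_sphere \<and> (card_of A, \<kappa>) \<in> ordLess \<longrightarrow>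
        (\<exists>B::'a set. \<exists>g::'a \<Rightarrow>\<^sub>L real. B \<subseteq> unit_sphere \<and> g \<in> unit_sphere \<and>
            (\<forall>x\<in>B. blinfun_apply g x = 1) \<and> delta_norms 1 B A))"

end

theory Submission
  imports Defs
begin
unbundle cardinal_syntax


definition hb_good :: "'a::real_normed_vector \<Rightarrow> ('a \<times> real) set set" where
  "hb_good y = {G. subspace G \<and> (\<forall>p\<in>G. snd p \<le> norm (fst p)) \<and> (y, norm y) \<in> G}"

lemma hb_functional:
  assumes "G \<in> hb_good y" "(x, a) \<in> G" "(x, b) \<in> G"
  shows "a = b"
proof -
  have S: "subspace G" and D: "\<forall>p\<in>G. snd p \<le> norm (fst p)" using assms(1) by (auto simp: hb_good_def)
  have "(x,a) - (x,b) \<in> G" using subspace_diff[OF S assms(2) assms(3)] .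
  hence 1: "a - b \<le> 0" using D by fastforce
  have "(x,b) - (x,a) \<in> G" using subspace_diff[OF S assms(3) assms(2)] .
  hence "b - a \<le> 0" using D by fastforce
  with 1 show ?thesis by simp
qed

lemma hb_union_chain:
  assumes C: "C \<in> chains (hb_good y)" and ne: "C \<noteq> {}"
  shows "\<Union>C \<in> hb_good y"
proof -
  have CA: "C \<subseteq> hb_good y" and ch: "\<forall>A\<in>C. \<forall>B\<in>C. A \<subseteq> B \<or> B \<subseteq> A"
    using C by (auto simp: chains_def chain_subset_def)
  have sub: "subspace G" if "G \<in> C" for G using CA that by (auto simp: hb_good_def)
  have "subspace (\<Union>C)"
    unfolding subspace_def
  proof (intro conjI ballI allI)
    obtain G where "G \<in> C" using ne by blast
    thus "0 \<in> \<Union>C" using sub[of G] by (auto simp: subspace_def)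
  next
    fix x z assume "x \<in> \<Union>C" "z \<in> \<Union>C"
    then obtain G1 G2 where g: "G1 \<in> C" "G2 \<in> C" "x \<in> G1" "z \<in> G2" by blast
    show "x + z \<in> \<Union>C"
    proof (cases "G1 \<subseteq> G2")
      case True thus ?thesis using g sub[of G2] by (auto simp: subspace_def)
    next
      case False hence "G2 \<subseteq> G1" using ch g by blast
      thus ?thesis using g sub[of G1] by (auto simp: subspace_def)
    qed
  next
    fix c x assume "x \<in> \<Union>C"
    then obtain G where "G \<in> C" "x \<in> G" by blast
    thus "c *\<^sub>R x \<in> \<Union>C" using sub[of G] unfolding subspace_def by blast
  qed
  moreover have "\<forall>p\<in>\<Union>C. snd p \<le> norm (fst p)" using CA by (auto simp: hb_good_def)
  moreover have "(y, norm y) \<in> \<Union>C" using CA ne by (auto simp: hb_good_def)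
  ultimately show ?thesis by (simp add: hb_good_def)
qed

lemma scale_norm_aux:
  fixes x x0 :: "'a::real_normed_vector"
  assumes "k > 0"
  shows "norm (x + k *\<^sub>R x0) = k * norm ((1/k) *\<^sub>R x + x0)"
proof -
  have "x + k *\<^sub>R x0 = k *\<^sub>R ((1/k) *\<^sub>R x + x0)" using assms by (simp add: algebra_simps)
  thus ?thesis using assms by simp
qed

lemma hb_extend:
  assumes M: "M \<in> hb_good y" and nx: "\<forall>a. (x0, a) \<notin> M"
  shows "\<exists>G\<in>hb_good y. M \<subseteq> G \<and> G \<noteq> M"
proof -
  have S: "subspace M" and D: "\<And>u a. (u,a)\<in>M \<Longrightarrow> a \<le> norm u" and Y: "(y, norm y) \<in> M"
    using M by (auto simp: hb_good_def)
  have add: "(u + v, a + b) \<in> M" if "(u,a) \<in> M" "(v,b) \<in> M" for u v a b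
    using S that subspace_add[of M "(u,a)" "(v,b)"] by simp
  have scl: "(k *\<^sub>R u, k * a) \<in> M" if "(u,a) \<in> M" for u a k
    using S that subspace_scale[of M "(u,a)" k] by simp
  have zero: "(0, 0) \<in> M" using S subspace_0[of M] by (simp add: zero_prod_def)
  define L where "L = (\<lambda>p. snd p - norm (fst p - x0)) ` M"
  define c where "c = Sup L"
  have key: "a - norm (u - x0) \<le> norm (v + x0) - b" if "(u,a) \<in> M" "(v,b) \<in> M" for u a v b
  proof -
    have "a + b \<le> norm (u + v)" using D[OF add[OF that]] .
    also have "\<dots> \<le> norm (u - x0) + norm (v + x0)"
      using norm_triangle_ineq[of "u - x0" "v + x0"] by simp
    finally show ?thesis by simp
  qed
  have Lne: "L \<noteq> {}" using zero by (auto simp: L_def)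
  have Lbd: "bdd_above L" unfolding bdd_above_def L_def
    using key[OF _ zero] by force
  have lower: "a - norm (u - x0) \<le> c" if "(u,a) \<in> M" for u a
    unfolding c_def using Lbd that by (auto simp: L_def intro!: cSup_upper image_eqI[where x="(u,a)"])
  have upper: "c \<le> norm (v + x0) - b" if "(v,b) \<in> M" for v b
    unfolding c_def using Lne that key by (auto simp: L_def intro!: cSup_least)
  define G where "G = span (insert (x0, c) M)"
  have spanM: "span M = M" using S by simp
  have dom: "snd p \<le> norm (fst p)" if pG: "p \<in> G" for p
  proof -
    obtain k where q: "p - k *\<^sub>R (x0, c) \<in> M" using pG unfolding G_def span_insert spanM by blast
    define x where "x = fst (p - k *\<^sub>R (x0, c))"
    define a where "a = snd (p - k *\<^sub>R (x0, c))"
    have xae: "(x,a) = p - k *\<^sub>R (x0, c)" unfolding x_def a_def by (rule prod.collapse)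
    have xa1: "(x,a) \<in> M" using q by (simp only: xae)
    have xa: "(x,a) \<in> M" "p = (x + k *\<^sub>R x0, a + k * c)"
      using xa1 by (auto simp: x_def a_def prod_eq_iff)
    have "a + k * c \<le> norm (x + k *\<^sub>R x0)"
    proof (cases k "0::real" rule: linorder_cases)
      case less
      define s where "s = -k"
      have s: "s > 0" using less by (simp add: s_def)
      have "(1/s) * a - norm ((1/s) *\<^sub>R x - x0) \<le> c" using lower[OF scl[OF xa(1), of "1/s"]] .
      hence "s * ((1/s) * a - norm ((1/s) *\<^sub>R x - x0)) \<le> s * c" using s by (simp add: mult_left_mono)
      hence "a - s * norm ((1/s) *\<^sub>R x - x0) \<le> s * c" using s by (simp add: algebra_simps)
      moreover have "norm (x + k *\<^sub>R x0) = s * norm ((1/s) *\<^sub>R x - x0)"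
        using scale_norm_aux[OF s, of x "-x0"] by (simp add: s_def)
      ultimately show ?thesis by (simp add: s_def)
    next
      case equal thus ?thesis using D[OF xa(1)] by simp
    next
      case greater
      have "c \<le> norm ((1/k) *\<^sub>R x + x0) - (1/k) * a" using upper[OF scl[OF xa(1), of "1/k"]] .
      hence "k * c \<le> k * (norm ((1/k) *\<^sub>R x + x0) - (1/k) * a)" using greater by (simp add: mult_left_mono)
      hence "k * c \<le> k * norm ((1/k) *\<^sub>R x + x0) - a" using greater by (simp add: algebra_simps)
      thus ?thesis using scale_norm_aux[OF greater, of x x0] by simp
    qed
    thus ?thesis using xa by simp
  qed
  have "G \<in> hb_good y" unfolding hb_good_def G_def
    using dom Y span_superset[of "insert (x0,c) M"] by (auto simp: G_def)
  moreover have "M \<subseteq> G" unfolding G_def using span_superset[of "insert (x0,c) M"] by blast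
  moreover have "(x0, c) \<in> G" unfolding G_def using span_superset by blast
  ultimately show ?thesis using nx by blast
qed

lemma hahn_banach_norming:
  fixes y :: "'a::real_normed_vector"
  assumes "y \<noteq> 0"
  shows "\<exists>g::'a \<Rightarrow>\<^sub>L real. norm g = 1 \<and> blinfun_apply g y = norm y"
proof -
  define G0 where "G0 = span {(y, norm y)}"
  have "G0 \<in> hb_good y"
  proof -
    have "subspace G0" unfolding G0_def by (rule subspace_span)
    moreover have "(y, norm y) \<in> G0" unfolding G0_def by (rule span_base) simp
    moreover have "snd p \<le> norm (fst p)" if "p \<in> G0" for p
    proof -
      obtain k where "p = k *\<^sub>R (y, norm y)" using \<open>p \<in> G0\<close> unfolding G0_def span_singleton by blast
      thus ?thesis by (simp add: mult_right_mono)
    qed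
    ultimately show ?thesis by (auto simp: hb_good_def)
  qed
  have "\<forall>C\<in>chains (hb_good y). \<exists>U\<in>hb_good y. \<forall>X\<in>C. X \<subseteq> U"
  proof
    fix C assume C: "C \<in> chains (hb_good y)"
    show "\<exists>U\<in>hb_good y. \<forall>X\<in>C. X \<subseteq> U"
    proof (cases "C = {}")
      case True thus ?thesis using \<open>G0 \<in> hb_good y\<close> by blast
    next
      case False thus ?thesis using hb_union_chain[OF C False] by blast
    qed
  qed
  from Zorn_Lemma2[OF this] obtain M where M: "M \<in> hb_good y"
    and max: "\<forall>X\<in>hb_good y. M \<subseteq> X \<longrightarrow> X = M" by blast
  have full: "\<exists>a. (x, a) \<in> M" for x
    using hb_extend[OF M, of x] max by blast
  define h where "h x = (SOME a. (x, a) \<in> M)" for x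
  have hM: "(x, h x) \<in> M" for x unfolding h_def using full someI_ex by metis
  have S: "subspace M" and D: "\<And>u a. (u,a)\<in>M \<Longrightarrow> a \<le> norm u" and Y: "(y, norm y) \<in> M"
    using M by (auto simp: hb_good_def)
  have hadd: "h (x + z) = h x + h z" for x z
    using subspace_add[OF S hM[of x] hM[of z]] hM[of "x+z"] hb_functional[OF M] by simp
  have hscl: "h (r *\<^sub>R x) = r *\<^sub>R h x" for r x
    using subspace_scale[OF S hM[of x], of r] hM[of "r *\<^sub>R x"] hb_functional[OF M] by simp
  have hb: "norm (h x) \<le> norm x * 1" for x
  proof -
    have "h x \<le> norm x" using D[OF hM] .
    moreover have "h (-x) \<le> norm x" using D[OF hM[of "-x"]] by simp
    moreover have "h (-x) = - h x" using hscl[of "-1" x] by simp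
    ultimately show ?thesis by simp
  qed
  have bl: "bounded_linear h" by (rule bounded_linear_intro[OF hadd hscl hb])
  define g where "g = Blinfun h"
  have ga: "blinfun_apply g = h" unfolding g_def using bl by (simp add: bounded_linear_Blinfun_apply)
  have hy: "h y = norm y" using hb_functional[OF M hM[of y] Y] .
  have "norm g \<le> 1" by (rule norm_blinfun_bound) (use hb ga in auto)
  moreover have "norm y \<le> norm g * norm y" using norm_blinfun[of g y] ga hy by simp
  hence "1 \<le> norm g" using assms by simp
  ultimately show ?thesis using ga hy by (intro exI[of _ g]) simp
qed


lemma norming_functional:
  fixes y :: "'a::real_normed_vector"
  assumes "y \<in> unit_sphere"
  shows "\<exists>g::'a \<Rightarrow>\<^sub>L real. g \<in> unit_sphere \<and> blinfun_apply g y = 1"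
proof -
  have "y \<noteq> 0" "norm y = 1" using assms by (auto simp: unit_sphere_def)
  then show ?thesis using hahn_banach_norming[of y] by (auto simp: unit_sphere_def)
qed

lemma blinfun_le_norm:
  fixes f :: "'a::real_normed_vector \<Rightarrow>\<^sub>L real"
  assumes "f \<in> unit_sphere"
  shows "blinfun_apply f z \<le> norm z"
proof -
  have "blinfun_apply f z \<le> norm (blinfun_apply f z)" by simp
  also have "\<dots> \<le> norm f * norm z" by (rule norm_blinfun)
  finally show ?thesis using assms by (simp add: unit_sphere_def)
qed

lemma almost_norming:
  fixes f :: "'a::real_normed_vector \<Rightarrow>\<^sub>L real"
  assumes "f \<in> unit_sphere" "0 < d" "d \<le> 1"
  shows "\<exists>x\<in>unit_sphere. blinfun_apply f x > 1 - d"
proof (rule ccontr)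
  assume "\<not> ?thesis"
  hence H: "\<And>x. norm x = 1 \<Longrightarrow> blinfun_apply f x \<le> 1 - d" by (auto simp: unit_sphere_def)
  have "norm f \<le> 1 - d"
  proof (rule norm_blinfun_bound)
    show "0 \<le> 1 - d" using assms by simp
    fix x
    show "norm (blinfun_apply f x) \<le> (1 - d) * norm x"
    proof (cases "x = 0")
      case True thus ?thesis by simp
    next
      case False
      define u where "u = (1 / norm x) *\<^sub>R x"
      have nu: "norm u = 1" "norm (-u) = 1" using False by (auto simp: u_def)
      have fu: "blinfun_apply f u = blinfun_apply f x / norm x"
        by (simp add: u_def blinfun.scaleR_right)
      have "blinfun_apply f u \<le> 1 - d" "- blinfun_apply f u \<le> 1 - d"
        using H[OF nu(1)] H[OF nu(2)] by (auto simp: blinfun.minus_right)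
      hence "\<bar>blinfun_apply f x / norm x\<bar> \<le> 1 - d" using fu by simp
      hence "\<bar>blinfun_apply f x\<bar> / norm x \<le> 1 - d" by simp
      thus ?thesis using False by (simp add: field_simps)
    qed
  qed
  thus False using assms by (simp add: unit_sphere_def)
qed

lemma nat_ordLess:
  fixes \<kappa> :: "'k rel"
  assumes "Card_order \<kappa>" "uncountable (Field \<kappa>)"
  shows "|UNIV::nat set| <o \<kappa>"
proof (rule ccontr)
  assume "\<not> ?thesis"
  hence "\<kappa> \<le>o |UNIV::nat set|"
    using ordLess_or_ordLeq[OF card_of_Well_order[of "UNIV::nat set"]
      card_order_on_well_order_on[OF assms(1)]] by blast
  moreover have "|Field \<kappa>| =o \<kappa>" using card_of_Field_ordIso[OF assms(1)] .
  ultimately have "|Field \<kappa>| \<le>o |UNIV::nat set|" using ordIso_ordLeq_trans by blast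
  hence "countable (Field \<kappa>)" unfolding countable_def card_of_ordLeq[symmetric] by auto
  thus False using assms(2) by simp
qed

lemma times_nat_ordLess:
  fixes \<kappa> :: "'k rel" and A :: "'b set"
  assumes "Card_order \<kappa>" "uncountable (Field \<kappa>)" "|A| <o \<kappa>"
  shows "|A \<times> (UNIV::nat set)| <o \<kappa>"
proof (cases "finite A")
  case True
  hence "countable (A \<times> (UNIV::nat set))" using countable_SIGMA[of A "\<lambda>_. UNIV::nat set"] countable_finite by blast
  then obtain h :: "'b \<times> nat \<Rightarrow> nat" where "inj_on h (A \<times> UNIV)" unfolding countable_def by blast
  hence "|A \<times> (UNIV::nat set)| \<le>o |UNIV::nat set|" unfolding card_of_ordLeq[symmetric] by blast
  thus ?thesis using nat_ordLess[OF assms(1,2)] ordLeq_ordLess_trans by blast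
next
  case False
  hence "|UNIV::nat set| \<le>o |A|" using infinite_iff_card_of_nat by blast
  hence "|A \<times> (UNIV::nat set)| \<le>o |A \<times> A|" by (rule card_of_Times_mono2)
  moreover have "|A \<times> A| =o |A|" using False card_of_Times_same_infinite by blast
  ultimately have "|A \<times> (UNIV::nat set)| \<le>o |A|" using ordLeq_ordIso_trans by blast
  thus ?thesis using assms(3) ordLeq_ordLess_trans by blast
qed

lemma part1:
  fixes \<kappa> :: "'k rel"
  assumes asq: "ASQ_lt \<kappa> TYPE('a::banach)"
  shows "SD2P_lt \<kappa> TYPE('a)"
  unfolding SD2P_lt_def
proof (intro allI impI)
  fix A :: "('a \<Rightarrow>\<^sub>L real) set" and \<epsilon> :: real
  assume A: "A \<subseteq> unit_sphere \<and> (card_of A, \<kappa>) \<in> ordLess" and e: "\<epsilon> > 0"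
  define d where "d = min \<epsilon> 1 / 4"
  have d: "0 < d" "d \<le> 1/4" "4 * d \<le> \<epsilon>" using e by (auto simp: d_def)
  have "\<forall>f\<in>A. \<exists>x. x \<in> unit_sphere \<and> blinfun_apply f x > 1 - d"
  proof
    fix f assume "f \<in> A"
    hence "f \<in> unit_sphere" using A by blast
    from almost_norming[OF this d(1)] d(2) show "\<exists>x. x \<in> unit_sphere \<and> blinfun_apply f x > 1 - d" by auto
  qed
  from bchoice[OF this] obtain X where X0: "\<forall>f\<in>A. X f \<in> unit_sphere \<and> blinfun_apply f (X f) > 1 - d"
    by blast
  have X: "\<And>f. f \<in> A \<Longrightarrow> X f \<in> unit_sphere \<and> blinfun_apply f (X f) > 1 - d" using X0 by blast
  have H1: "X ` A \<subseteq> unit_sphere" using X by blast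
  have H2: "(card_of (X ` A), \<kappa>) \<in> ordLess"
    using card_of_image[of X A] A ordLeq_ordLess_trans by blast
  from asq[unfolded ASQ_lt_def, rule_format, OF conjI[OF H1 H2] d(1)]
  obtain y where y: "y \<in> unit_sphere"
    and yn0: "\<forall>x\<in>X ` A. norm (x + y) \<le> 1 + d \<and> norm (x - y) \<le> 1 + d"
    by blast
  have yn: "\<And>x. x \<in> X ` A \<Longrightarrow> norm (x + y) \<le> 1 + d \<and> norm (x - y) \<le> 1 + d"
    using yn0 by blast
  obtain g :: "'a \<Rightarrow>\<^sub>L real" where g: "g \<in> unit_sphere" "blinfun_apply g y = 1"
    using norming_functional[OF y] by blast
  define b where "b f = X f + y" for f
  define B where "B = (\<lambda>f. (1 / norm (b f)) *\<^sub>R b f) ` A"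
  have props: "(1 / norm (b f)) *\<^sub>R b f \<in> unit_sphere \<and>
      blinfun_apply g ((1 / norm (b f)) *\<^sub>R b f) \<ge> 1 - \<epsilon> \<and>
      blinfun_apply f ((1 / norm (b f)) *\<^sub>R b f) \<ge> 1 - \<epsilon>" if fA: "f \<in> A" for f
  proof -
    let ?x = "X f"
    have f1: "f \<in> unit_sphere" using A fA by blast
    have n1: "norm (?x + y) \<le> 1 + d" "norm (?x - y) \<le> 1 + d" using yn fA by auto
    have fx: "blinfun_apply f ?x > 1 - d" using X fA by blast
    have "blinfun_apply f (?x - y) \<le> 1 + d" using blinfun_le_norm[OF f1, of "?x - y"] n1 by simp
    hence fy: "blinfun_apply f y \<ge> blinfun_apply f ?x - 1 - d" by (simp add: blinfun.diff_right)
    have fb: "blinfun_apply f (b f) > 1 - 3 * d" using fx fy by (simp add: b_def blinfun.add_right)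
    have "blinfun_apply g (y - ?x) \<le> 1 + d"
      using blinfun_le_norm[OF g(1), of "y - ?x"] n1 norm_minus_commute[of y ?x] by simp
    hence gb: "blinfun_apply g (b f) \<ge> 1 - d" using g(2) by (simp add: b_def blinfun.add_right blinfun.diff_right)
    have nb: "norm (b f) \<le> 1 + d" using n1 by (simp add: b_def)
    have nb2: "norm (b f) \<ge> 1 - d" using gb blinfun_le_norm[OF g(1), of "b f"] by simp
    have npos: "norm (b f) > 0" using nb2 d(2) by linarith
    have s: "(1 / norm (b f)) *\<^sub>R b f \<in> unit_sphere" using npos by (simp add: unit_sphere_def)
    have "blinfun_apply g ((1 / norm (b f)) *\<^sub>R b f) = blinfun_apply g (b f) / norm (b f)"
      by (simp add: blinfun.scaleR_right)
    also have "\<dots> \<ge> (1 - d) / (1 + d)"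
      using gb nb npos d by (intro frac_le) auto
    finally have G1: "blinfun_apply g ((1 / norm (b f)) *\<^sub>R b f) \<ge> (1 - d) / (1 + d)" .
    have dd: "d * d \<ge> 0" by simp
    have "(1 - 2*d) * (1 + d) \<le> 1 - d" using dd by (simp add: algebra_simps)
    hence "1 - 2*d \<le> (1 - d) / (1 + d)" using d by (simp add: pos_le_divide_eq)
    hence "(1 - d) / (1 + d) \<ge> 1 - \<epsilon>" using d by linarith
    hence G: "blinfun_apply g ((1 / norm (b f)) *\<^sub>R b f) \<ge> 1 - \<epsilon>" using G1 by linarith
    have "blinfun_apply f ((1 / norm (b f)) *\<^sub>R b f) = blinfun_apply f (b f) / norm (b f)"
      by (simp add: blinfun.scaleR_right)
    also have "\<dots> \<ge> (1 - 3 * d) / (1 + d)"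
      using fb nb npos d by (intro frac_le) auto
    finally have F1: "blinfun_apply f ((1 / norm (b f)) *\<^sub>R b f) \<ge> (1 - 3 * d) / (1 + d)" .
    have "(1 - 4*d) * (1 + d) \<le> 1 - 3 * d" using dd by (simp add: algebra_simps)
    hence "1 - 4*d \<le> (1 - 3 * d) / (1 + d)" using d by (simp add: pos_le_divide_eq)
    hence "(1 - 3 * d) / (1 + d) \<ge> 1 - \<epsilon>" using d by linarith
    hence "blinfun_apply f ((1 / norm (b f)) *\<^sub>R b f) \<ge> 1 - \<epsilon>" using F1 by linarith
    with s G show ?thesis by blast
  qed
  have "B \<subseteq> unit_sphere" using props by (auto simp: B_def)
  moreover have "\<forall>x\<in>B. blinfun_apply g x \<ge> 1 - \<epsilon>" using props by (auto simp: B_def)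
  moreover have "delta_norms (1 - \<epsilon>) B A"
    unfolding delta_norms_def
  proof (intro ballI allI impI)
    fix f and \<eta> :: real assume "f \<in> A" "\<eta> > 0"
    thus "\<exists>x\<in>B. blinfun_apply f x > 1 - \<epsilon> - \<eta>"
      using props[of f] unfolding B_def by force
  qed
  ultimately show "\<exists>B g. B \<subseteq> unit_sphere \<and> g \<in> unit_sphere \<and>
      (\<forall>x\<in>B. 1 - \<epsilon> \<le> blinfun_apply g x) \<and> delta_norms (1 - \<epsilon>) B A"
    using g(1) by (intro exI[where x=B] exI[where x=g] conjI) simp_all
qed

lemma part2:
  fixes \<kappa> :: "'k rel"
  assumes card: "Card_order \<kappa>" and unc: "uncountable (Field \<kappa>)"
    and sq: "SQ_lt \<kappa> TYPE('a::banach)"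
  shows "one_ASD2P_lt \<kappa> TYPE('a)"
  unfolding one_ASD2P_lt_def
proof (intro allI impI)
  fix A :: "('a \<Rightarrow>\<^sub>L real) set"
  assume A: "A \<subseteq> unit_sphere \<and> (card_of A, \<kappa>) \<in> ordLess"
  have "\<forall>p\<in>A \<times> (UNIV::nat set). \<exists>x. x \<in> unit_sphere \<and>
      blinfun_apply (fst p) x > 1 - 1 / (real (snd p) + 1)"
  proof
    fix p :: "('a \<Rightarrow>\<^sub>L real) \<times> nat" assume "p \<in> A \<times> UNIV"
    hence "fst p \<in> unit_sphere" using A by auto
    moreover have "0 < 1 / (real (snd p) + 1)" "1 / (real (snd p) + 1) \<le> 1" by auto
    ultimately show "\<exists>x. x \<in> unit_sphere \<and> blinfun_apply (fst p) x > 1 - 1 / (real (snd p) + 1)"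
      using almost_norming by blast
  qed
  from bchoice[OF this] obtain X where X0: "\<forall>p\<in>A \<times> (UNIV::nat set). X p \<in> unit_sphere \<and>
      blinfun_apply (fst p) (X p) > 1 - 1 / (real (snd p) + 1)" by blast
  have X: "\<And>p. p \<in> A \<times> (UNIV::nat set) \<Longrightarrow> X p \<in> unit_sphere \<and>
      blinfun_apply (fst p) (X p) > 1 - 1 / (real (snd p) + 1)" using X0 by blast
  have H1: "X ` (A \<times> UNIV) \<subseteq> unit_sphere" using X by blast
  have H2: "(card_of (X ` (A \<times> UNIV)), \<kappa>) \<in> ordLess"
    using card_of_image[of X "A \<times> UNIV"] times_nat_ordLess[OF card unc, of A] A
      ordLeq_ordLess_trans by blast
  from sq[unfolded SQ_lt_def, rule_format, OF conjI[OF H1 H2]]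
  obtain y where y: "y \<in> unit_sphere"
    and yn0: "\<forall>x\<in>X ` (A \<times> UNIV). norm (x + y) \<le> 1 \<and> norm (x - y) \<le> 1"
    by blast
  have yn: "\<And>x. x \<in> X ` (A \<times> UNIV) \<Longrightarrow> norm (x + y) \<le> 1 \<and> norm (x - y) \<le> 1"
    using yn0 by blast
  obtain g :: "'a \<Rightarrow>\<^sub>L real" where g: "g \<in> unit_sphere" "blinfun_apply g y = 1"
    using norming_functional[OF y] by blast
  define B where "B = (\<lambda>p. X p + y) ` (A \<times> (UNIV::nat set))"
  have props: "X (f, n) + y \<in> unit_sphere \<and> blinfun_apply g (X (f, n) + y) = 1 \<and>
      blinfun_apply f (X (f, n) + y) > 1 - 2 / (real n + 1)" if fA: "f \<in> A" for f n
  proof -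
    let ?x = "X (f, n)"
    have f1: "f \<in> unit_sphere" using A fA by blast
    have n1: "norm (?x + y) \<le> 1" "norm (?x - y) \<le> 1" using yn fA by auto
    have fx: "blinfun_apply f ?x > 1 - 1 / (real n + 1)" using X[of "(f,n)"] fA by auto
    have "blinfun_apply f (?x - y) \<le> 1" using blinfun_le_norm[OF f1, of "?x - y"] n1 by simp
    hence fy: "blinfun_apply f y \<ge> blinfun_apply f ?x - 1" by (simp add: blinfun.diff_right)
    have F: "blinfun_apply f (?x + y) > 1 - 2 / (real n + 1)"
      using fx fy by (simp add: blinfun.add_right)
    have "blinfun_apply g (y - ?x) \<le> 1"
      using blinfun_le_norm[OF g(1), of "y - ?x"] n1 norm_minus_commute[of y ?x] by simp
    hence g1: "blinfun_apply g ?x \<ge> 0" using g(2) by (simp add: blinfun.diff_right)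
    have "blinfun_apply g (?x + y) \<le> 1" using blinfun_le_norm[OF g(1), of "?x + y"] n1 by simp
    hence g2: "blinfun_apply g ?x \<le> 0" using g(2) by (simp add: blinfun.add_right)
    have G: "blinfun_apply g (?x + y) = 1" using g1 g2 g(2) by (simp add: blinfun.add_right)
    have "norm (?x + y) \<ge> 1" using blinfun_le_norm[OF g(1), of "?x + y"] G by simp
    hence "?x + y \<in> unit_sphere" using n1 by (simp add: unit_sphere_def)
    with G F show ?thesis by blast
  qed
  have "B \<subseteq> unit_sphere" using props by (auto simp: B_def)
  moreover have "\<forall>x\<in>B. blinfun_apply g x = 1" using props by (auto simp: B_def)
  moreover have "delta_norms 1 B A"
    unfolding delta_norms_def
  proof (intro ballI allI impI)
    fix f and \<eta> :: real assume fA: "f \<in> A" and eta: "\<eta> > 0"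
    obtain n :: nat where n: "2 / \<eta> < real n" using reals_Archimedean2 by blast
    have "2 / \<eta> < real n + 1" using n by simp
    hence "2 < \<eta> * (real n + 1)" using eta by (simp add: field_simps)
    hence "2 / (real n + 1) < \<eta>" by (simp add: field_simps)
    hence "blinfun_apply f (X (f, n) + y) > 1 - \<eta>" using props[OF fA, of n] by linarith
    moreover have "X (f, n) + y \<in> B" using fA by (auto simp: B_def)
    ultimately show "\<exists>x\<in>B. blinfun_apply f x > 1 - \<eta>" by blast
  qed
  ultimately have C: "B \<subseteq> unit_sphere \<and> g \<in> unit_sphere \<and>
      (\<forall>x\<in>B. blinfun_apply g x = 1) \<and> delta_norms 1 B A"
    using g(1) by simp
  show "\<exists>B (g::'a \<Rightarrow>\<^sub>L real). B \<subseteq> unit_sphere \<and> g \<in> unit_sphere \<and>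
      (\<forall>x\<in>B. blinfun_apply g x = 1) \<and> delta_norms 1 B A"
    using C by blast
qed

theorem proposition5p3:
  fixes \<kappa> :: "'k rel"
  assumes "Card_order \<kappa>" and "infinite (Field \<kappa>)"
  shows "(ASQ_lt \<kappa> TYPE('a::banach) \<longrightarrow> SD2P_lt \<kappa> TYPE('a)) \<and>
         (uncountable (Field \<kappa>) \<and> SQ_lt \<kappa> TYPE('a) \<longrightarrow> one_ASD2P_lt \<kappa> TYPE('a))"
proof (intro conjI impI)
  assume "ASQ_lt \<kappa> TYPE('a)"
  thus "SD2P_lt \<kappa> TYPE('a)" by (rule part1)
next
  assume h: "uncountable (Field \<kappa>) \<and> SQ_lt \<kappa> TYPE('a)"
  show "one_ASD2P_lt \<kappa> TYPE('a)" using part2[OF assms(1)] h by blast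
qed

end
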